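(* Let $A=\{-1,+1\}$, $\sigma\in(0,1)$, and let $P$ be a kernel on $A$ whose probabilistic skeleton $(\tau^\sigma,p)$ with respect to $\tau^\sigma$ satisfies $\inf_{v\in\tau^\sigma}p(1|v)>\sigma$. Then $(\tau^\sigma,p)$ is good, and its good coalescence time $\bar\theta[0]$ has exponential tail.
   Context: A past is $\underline a=\ldots a_{-2}a_{-1}\in A^{-\mathbb N}$; concatenation puts the older part on the left ($\underline z\,v$ is the past ending with the finite string $v$, preceded by $\underline z$). A kernel is $P:A\times A^{-\mathbb N}\to[0,1]$ with $\sum_aP(a|\underline a)=1$; $\alpha(a):=\inf_{\underline z}P(a|\underline z)$, $\alpha_{-1}:=\alpha(-1)+\alpha(1)$. For a past $\underline a$, $T_\sigma(\underline a):=\inf\{k\ge1:\frac1k\sum_{i=1}^k\mathbf 1\{a_{-i}=1\}\ge\sigma\}$ ($=+\infty$ if the set is empty). $\tau^\sigma$ is the set consisting of the finite strings $a_{-T_\sigma(\underline a)}^{-1}$ for pasts with $T_\sigma(\underline a)<\infty$ together with the pasts $\underline a$ with $T_\sigma(\underline a)=\infty$; it is a context tree: every past has exactly one element of $\tau^\sigma$ as suffix, denoted $c_{\tau^\sigma}(\underline a)$. The probabilistic skeleton is $(\tau^\sigma,p)$ with $p(a|v):=\inf_{\underline z}P(a|\underline z v)$ for finite $v\in\tau^\sigma$ and $p(a|v):=P(a|v)$ for infinite $v$. $\mathbf U=(U_i)_{i\in\mathbb Z}$ i.i.d. uniform on $[0,1)$. With $A$ enumerated in a fixed order $a^{(1)},a^{(2)}$,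 $Y_i:=a^{(1)}$ if $U_i<\alpha(a^{(1)})$, $Y_i:=a^{(2)}$ if $\alpha(a^{(1)})\le U_i<\alpha_{-1}$, $Y_i:=\star$ if $U_i\ge\alpha_{-1}$. For $\mathbf a\in A^{\mathbb Z}$, $Y_i(\mathbf a):=Y_i$ if $Y_i\in A$, else $a_i$. $c^n_\tau:=\sup_{\mathbf a}|c_{\tau^\sigma}(\ldots Y_{n-1}(\mathbf a)Y_n(\mathbf a))|$. $\bar\theta[m]:=\sup\{i\le m:\forall j\in\{i,\dots,m\},\ Y_j\in A\text{ or }c^j_\tau\le j-i\}$ (sup of empty set $=-\infty$) is the good coalescence time; $(\tau^\sigma,p)$ is good if $\mathbb E|\bar\theta[0]|<\infty$. Exponential tail: $\mathbb P(|W|\ge n)\le Dd^n$ for some $D>0$, $0<d<1$. *)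

theory Defs
  imports "HOL-Probability.Probability"
begin

definition symA :: "int set" where "symA = {-1, 1}"

text \<open>A past a = ... a_{-2} a_{-1} is represented as z :: nat => int with z k = a_{-(k+1)}.\<close>
definition pasts :: "(nat \<Rightarrow> int) set" where
  "pasts = {z. \<forall>k. z k \<in> symA}"

definition biseqs :: "(int \<Rightarrow> int) set" where
  "biseqs = {a. \<forall>i. a i \<in> symA}"

text \<open>Finite strings are lists in chronological order (oldest first, last element = a_{-1}).
  concat_past z v is the past z v ending with v, preceded by z.\<close>
definition concat_past :: "(nat \<Rightarrow> int) \<Rightarrow> int list \<Rightarrow> (nat \<Rightarrow> int)" where
  "concat_past z v = (\<lambda>k. if k < length v then v ! (length v - 1 - k) else z (k - length v))"

definition is_kernel :: "(int \<Rightarrow> (nat \<Rightarrow> int) \<Rightarrow> real) \<Rightarrow> bool" where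
  "is_kernel P \<longleftrightarrow> (\<forall>z\<in>pasts. (\<forall>a\<in>symA. 0 \<le> P a z \<and> P a z \<le> 1) \<and> (\<Sum>a\<in>symA. P a z) = 1)"

definition alpha :: "(int \<Rightarrow> (nat \<Rightarrow> int) \<Rightarrow> real) \<Rightarrow> int \<Rightarrow> real" where
  "alpha P a = (INF z\<in>pasts. P a z)"

definition alpha_m1 :: "(int \<Rightarrow> (nat \<Rightarrow> int) \<Rightarrow> real) \<Rightarrow> real" where
  "alpha_m1 P = alpha P (-1) + alpha P 1"

definition T_sigma :: "real \<Rightarrow> (nat \<Rightarrow> int) \<Rightarrow> enat" where
  "T_sigma \<sigma> a = Inf {enat k | k. k \<ge> 1 \<and>
      (\<Sum>i<k. (if a i = 1 then 1 else 0 :: real)) / real k \<ge> \<sigma>}"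

text \<open>Elements of a context tree: finite strings (Inl) or pasts (Inr).\<close>
type_synonym ctx = "int list + (nat \<Rightarrow> int)"

text \<open>The finite string a_{-n}^{-1} (chronological order).\<close>
definition suffix_string :: "(nat \<Rightarrow> int) \<Rightarrow> nat \<Rightarrow> int list" where
  "suffix_string a n = rev (map a [0..<n])"

definition tau :: "real \<Rightarrow> ctx set" where
  "tau \<sigma> = {Inl (suffix_string a n) | a n. a \<in> pasts \<and> T_sigma \<sigma> a = enat n}
          \<union> {Inr a | a. a \<in> pasts \<and> T_sigma \<sigma> a = \<infinity>}"

definition c_tau :: "real \<Rightarrow> (nat \<Rightarrow> int) \<Rightarrow> ctx" where
  "c_tau \<sigma> a = (case T_sigma \<sigma> a of enat n \<Rightarrow> Inl (suffix_string a n) | \<infinity> \<Rightarrow> Inr a)"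

definition ctx_len :: "ctx \<Rightarrow> enat" where
  "ctx_len c = (case c of Inl v \<Rightarrow> enat (length v) | Inr _ \<Rightarrow> \<infinity>)"

definition skel_p :: "(int \<Rightarrow> (nat \<Rightarrow> int) \<Rightarrow> real) \<Rightarrow> int \<Rightarrow> ctx \<Rightarrow> real" where
  "skel_p P a c = (case c of Inl v \<Rightarrow> (INF z\<in>pasts. P a (concat_past z v)) | Inr u \<Rightarrow> P a u)"

text \<open>Y_i from U_i, with enumeration a1, a2 of A; None stands for the symbol star.\<close>
definition Yvar :: "(int \<Rightarrow> (nat \<Rightarrow> int) \<Rightarrow> real) \<Rightarrow> int \<Rightarrow> int \<Rightarrow> real \<Rightarrow> int option" where
  "Yvar P a1 a2 u = (if u < alpha P a1 then Some a1
                     else if u < alpha_m1 P then Some a2 else None)"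

definition Yfill :: "(int \<Rightarrow> int option) \<Rightarrow> (int \<Rightarrow> int) \<Rightarrow> int \<Rightarrow> int" where
  "Yfill y a i = (case y i of Some b \<Rightarrow> b | None \<Rightarrow> a i)"

definition c_n :: "real \<Rightarrow> (int \<Rightarrow> int option) \<Rightarrow> int \<Rightarrow> enat" where
  "c_n \<sigma> y n = (SUP a\<in>biseqs. ctx_len (c_tau \<sigma> (\<lambda>k. Yfill y a (n - int k))))"

text \<open>Good coalescence time; sup of the empty set is -infinity.\<close>
definition theta_bar :: "real \<Rightarrow> (int \<Rightarrow> int option) \<Rightarrow> int \<Rightarrow> ereal" where
  "theta_bar \<sigma> y m = Sup ((\<lambda>i. ereal (real_of_int i)) `
      {i. i \<le> m \<and> (\<forall>j\<in>{i..m}. y j \<noteq> None \<or> c_n \<sigma> y j \<le> enat (nat (j - i)))})"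

end

theory Submission imports Defs begin

definition bval :: "int option \<Rightarrow> real" where "bval v = (if v = Some 1 then 1 else 0)"

fun nogoodL :: "real \<Rightarrow> real \<Rightarrow> int option list \<Rightarrow> bool" where
  "nogoodL s D [] = True"
| "nogoodL s D (v#vs) = ((D > 0 \<or> v = None) \<and> nogoodL s (max (D - bval v + s) 0) vs)"

definition Ls :: "'a set \<Rightarrow> nat \<Rightarrow> 'a list set" where
  "Ls V n = {xs. set xs \<subseteq> V \<and> length xs = n}"

definition wsum :: "int option set \<Rightarrow> (int option \<Rightarrow> real) \<Rightarrow> real \<Rightarrow> nat \<Rightarrow> real \<Rightarrow> real" where
  "wsum V p s n D = (\<Sum>vs\<in>Ls V n. if nogoodL s D vs then prod_list (map p vs) else 0)"

lemma sum_Ls_Suc: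
  assumes "finite V"
  shows "(\<Sum>xs\<in>Ls V (Suc n). h xs) = (\<Sum>v\<in>V. \<Sum>vs\<in>Ls V n. h (v#vs))"
proof -
  have "(\<Sum>xs\<in>Ls V (Suc n). h xs) = (\<Sum>xs\<in>(\<lambda>(xs, n). n#xs) ` (Ls V n \<times> V). h xs)"
    unfolding Ls_def lists_length_Suc_eq ..
  also have "\<dots> = (\<Sum>(vs,v)\<in>Ls V n \<times> V. h (v#vs))"
    by (subst sum.reindex) (auto simp: inj_on_def split_beta intro!: sum.cong)
  also have "\<dots> = (\<Sum>vs\<in>Ls V n. \<Sum>v\<in>V. h (v#vs))"
    by (rule sum.cartesian_product[symmetric])
  also have "\<dots> = (\<Sum>v\<in>V. \<Sum>vs\<in>Ls V n. h (v#vs))"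
    by (rule sum.swap)
  finally show ?thesis .
qed

lemma wsum_Suc:
  assumes "finite V"
  shows "wsum V p s (Suc n) D = (\<Sum>v\<in>V. if D > 0 \<or> v = None then p v * wsum V p s n (max (D - bval v + s) 0) else 0)"
  unfolding wsum_def sum_Ls_Suc[OF assms]
  by (intro sum.cong refl) (auto simp: sum_distrib_left intro!: sum.cong)

lemma wsum_nonneg:
  assumes "\<And>v. v \<in> V \<Longrightarrow> 0 \<le> p v"
  shows "0 \<le> wsum V p s n D"
  unfolding wsum_def Ls_def using assms
  by (intro sum_nonneg) (auto intro!: prod_list_nonneg; blast)

lemma wsum_bound:
  fixes q \<beta> lm \<rho> s :: real
  assumes fin: "finite V" and pnn: "\<And>v. v \<in> V \<Longrightarrow> 0 \<le> p v" and psum: "(\<Sum>v\<in>V. p v) = 1"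
    and S1: "Some 1 \<in> V" and N: "None \<in> V" and S1N: "Some 1 \<noteq> (None::int option)"
    and pq: "p (Some 1) = q" and pN: "p None = 1 - \<beta>"
    and lam: "0 \<le> lm" and s: "0 < s" "s < 1"
    and r1: "q * exp (- lm * (1 - s)) + (1 - q) * exp (lm * s) \<le> \<rho>"
    and r2: "(1 - \<beta>) * exp lm \<le> \<rho>"
  shows "wsum V p s n D \<le> \<rho> ^ n * (if D \<le> 0 then 1 else exp (lm * (D + 1 - s)))"
proof (induction n arbitrary: D)
  case 0
  have "{xs. set xs \<subseteq> V \<and> length xs = 0} = {[]}" by auto
  then have "wsum V p s 0 D = 1" unfolding wsum_def Ls_def by simp
  then show ?case using lam s by simp
next
  case (Suc n)
  define G where "G = (\<lambda>D::real. if D \<le> 0 then 1 else exp (lm * (D + 1 - s)))"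
  have IH: "\<And>D. wsum V p s n D \<le> \<rho> ^ n * G D" using Suc unfolding G_def by blast
  have rho0: "0 \<le> \<rho>" using r2 pN pnn[OF N] by (smt (verit) exp_gt_zero mult_nonneg_nonneg)
  show ?case
  proof (cases "D > 0")
    case True
    have "wsum V p s (Suc n) D = (\<Sum>v\<in>V. p v * wsum V p s n (max (D - bval v + s) 0))"
      using True by (simp add: wsum_Suc[OF fin])
    also have "\<dots> \<le> (\<Sum>v\<in>V. p v * (\<rho> ^ n * (if v = Some 1 then exp (lm * D) else exp (lm * (D+1)))))"
    proof (intro sum_mono mult_left_mono pnn)
      fix v assume "v \<in> V"
      have "G (max (D - bval v + s) 0) \<le> (if v = Some 1 then exp (lm * D) else exp (lm * (D+1)))"
        using True lam s by (auto simp: G_def bval_def algebra_simps)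
      then show "wsum V p s n (max (D - bval v + s) 0) \<le> \<rho> ^ n * (if v = Some 1 then exp (lm * D) else exp (lm * (D+1)))"
        using IH[of "max (D - bval v + s) 0"] rho0 by (meson order_trans mult_left_mono zero_le_power)
    qed
    also have "\<dots> = \<rho> ^ n * (\<Sum>v\<in>V. p v * (if v = Some 1 then exp (lm * D) else exp (lm * (D+1))))"
      by (simp add: sum_distrib_left algebra_simps)
    also have "(\<Sum>v\<in>V. p v * (if v = Some 1 then exp (lm * D) else exp (lm * (D+1))))
        = q * exp (lm * D) + (1 - q) * exp (lm * (D+1))"
    proof -
      have "(\<Sum>v\<in>V. p v * (if v = Some 1 then exp (lm * D) else exp (lm * (D+1))))
          = p (Some 1) * exp (lm * D) + (\<Sum>v\<in>V - {Some 1}. p v * exp (lm * (D+1)))"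
        using fin S1 by (subst sum.remove[of _ "Some 1"]) (auto intro!: sum.cong)
      also have "(\<Sum>v\<in>V - {Some 1}. p v * exp (lm * (D+1))) = (1 - q) * exp (lm * (D+1))"
        using psum fin S1 pq by (simp add: sum_distrib_right[symmetric] sum_diff1)
      finally show ?thesis using pq by simp
    qed
    also have "q * exp (lm * D) + (1 - q) * exp (lm * (D+1))
        = exp (lm * (D + 1 - s)) * (q * exp (- lm * (1 - s)) + (1 - q) * exp (lm * s))"
      by (simp add: algebra_simps flip: exp_add)
    also have "\<rho> ^ n * \<dots> \<le> \<rho> ^ n * (exp (lm * (D + 1 - s)) * \<rho>)"
      using r1 rho0 by (intro mult_left_mono) auto
    finally show ?thesis using True by (simp add: algebra_simps)
  next
    case False
    have "wsum V p s (Suc n) D = (\<Sum>v\<in>V. if v = None then p v * wsum V p s n (max (D - bval v + s) 0) else 0)"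
      using False by (simp add: wsum_Suc[OF fin])
    also have "\<dots> = p None * wsum V p s n (max (D + s) 0)"
      using fin N by (simp add: sum.delta' bval_def)
    also have "\<dots> \<le> p None * (\<rho> ^ n * exp lm)"
    proof (intro mult_left_mono pnn N)
      have "G (max (D + s) 0) \<le> exp lm" using False lam s by (auto simp: G_def mult_left_le)
      then show "wsum V p s n (max (D + s) 0) \<le> \<rho> ^ n * exp lm"
        using IH[of "max (D + s) 0"] rho0 by (meson order_trans mult_left_mono zero_le_power)
    qed
    also have "\<dots> = \<rho> ^ n * ((1 - \<beta>) * exp lm)" using pN by simp
    also have "\<dots> \<le> \<rho> ^ n * \<rho>" using r2 rho0 by (intro mult_left_mono) auto
    finally show ?thesis using False by (simp add: algebra_simps)
  qed
qed


definition frac :: "(nat \<Rightarrow> int) \<Rightarrow> nat \<Rightarrow> real" where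
  "frac z k = (\<Sum>i<k. (if z i = 1 then 1 else 0 :: real)) / real k"

lemma ctx_len_c_tau: "ctx_len (c_tau \<sigma> z) = T_sigma \<sigma> z"
  by (cases "T_sigma \<sigma> z") (auto simp: ctx_len_def c_tau_def suffix_string_def)

lemma T_le: "T_sigma \<sigma> z \<le> enat K \<longleftrightarrow> (\<exists>k. 1 \<le> k \<and> k \<le> K \<and> \<sigma> \<le> frac z k)"
proof
  assume "\<exists>k. 1 \<le> k \<and> k \<le> K \<and> \<sigma> \<le> frac z k"
  then obtain k where k: "1 \<le> k" "k \<le> K" "\<sigma> \<le> frac z k" by blast
  then have "T_sigma \<sigma> z \<le> enat k" unfolding T_sigma_def frac_def
    by (intro Inf_lower) auto
  then show "T_sigma \<sigma> z \<le> enat K" using k by (meson enat_ord_simps(1) order_trans)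
next
  assume a: "T_sigma \<sigma> z \<le> enat K"
  define A where "A = {enat k | k. k \<ge> 1 \<and> (\<Sum>i<k. (if z i = 1 then 1 else 0 :: real)) / real k \<ge> \<sigma>}"
  have T: "T_sigma \<sigma> z = Inf A" unfolding T_sigma_def A_def ..
  have "A \<noteq> {}" using a T by (auto simp: Inf_enat_def)
  then have "Inf A \<in> A" by (auto simp: Inf_enat_def intro: LeastI)
  then obtain k where "Inf A = enat k" "k \<ge> 1" "\<sigma> \<le> frac z k" unfolding A_def frac_def by auto
  then show "\<exists>k. 1 \<le> k \<and> k \<le> K \<and> \<sigma> \<le> frac z k" using a T by auto
qed

definition Sset :: "real \<Rightarrow> (int \<Rightarrow> int option) \<Rightarrow> int set" where
  "Sset \<sigma> y = {i. i \<le> 0 \<and> (\<forall>j\<in>{i..0}. y j \<noteq> None \<or> c_n \<sigma> y j \<le> enat (nat (j - i)))}"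

lemma theta_bar_Sset: "theta_bar \<sigma> y 0 = Sup ((\<lambda>i. ereal (real_of_int i)) ` Sset \<sigma> y)"
  unfolding theta_bar_def Sset_def ..

definition sq :: "(int \<Rightarrow> int option) \<Rightarrow> nat \<Rightarrow> int option" where
  "sq y k = y (- int k)"

definition Wk :: "real \<Rightarrow> (int \<Rightarrow> int option) \<Rightarrow> nat \<Rightarrow> real" where
  "Wk \<sigma> y k = (\<Sum>t<k. bval (sq y t) - \<sigma>)"

fun Mx :: "real \<Rightarrow> (int \<Rightarrow> int option) \<Rightarrow> nat \<Rightarrow> real" where
  "Mx \<sigma> y 0 = 0"
| "Mx \<sigma> y (Suc k) = max (Mx \<sigma> y k) (Wk \<sigma> y (Suc k))"

lemma Mx_ge: "l \<le> k \<Longrightarrow> Wk \<sigma> y l \<le> Mx \<sigma> y k"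
proof (induction k)
  case 0 then show ?case by (simp add: Wk_def)
next
  case (Suc k) then show ?case by (cases "l = Suc k") auto
qed

lemma nogood_good:
  assumes "\<not> nogoodL \<sigma> D (map (sq y) [k..<k+n])" "D = Mx \<sigma> y k - Wk \<sigma> y k"
  shows "\<exists>j. k \<le> j \<and> j < k + n \<and> sq y j \<noteq> None \<and> Wk \<sigma> y j = Mx \<sigma> y j"
  using assms
proof (induction n arbitrary: k D)
  case 0 then show ?case by simp
next
  case (Suc n)
  have e: "[k..<k + Suc n] = k # [Suc k..<Suc k + n]" by (simp add: upt_rec del: upt_Suc)
  have D0: "D \<ge> 0" using Suc.prems(2) Mx_ge[of k k] by simp
  show ?case
  proof (cases "(D > 0 \<or> sq y k = None)")
    case False
    then show ?thesis using Suc.prems(2) D0 by auto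
  next
    case True
    then have ng: "\<not> nogoodL \<sigma> (max (D - bval (sq y k) + \<sigma>) 0) (map (sq y) [Suc k..<Suc k+n])"
      using Suc.prems(1) unfolding e by (simp del: upt_Suc)
    have "max (D - bval (sq y k) + \<sigma>) 0 = Mx \<sigma> y (Suc k) - Wk \<sigma> y (Suc k)"
      using Suc.prems(2) by (simp add: Wk_def)
    from Suc.IH[OF ng this] obtain j where "Suc k \<le> j" "j < Suc k + n" "sq y j \<noteq> None" "Wk \<sigma> y j = Mx \<sigma> y j" by blast
    then show ?thesis by (intro exI[of _ j]) auto
  qed
qed

lemma good_in_S:
  assumes j: "sq y j \<noteq> None" "Wk \<sigma> y j = Mx \<sigma> y j"
  shows "- int j \<in> Sset \<sigma> y"
  unfolding Sset_def
proof (intro CollectI conjI ballI)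
  fix t assume t: "t \<in> {- int j..0}"
  define l where "l = nat (- t)"
  have tl: "t = - int l" "l \<le> j" using t by (auto simp: l_def)
  show "y t \<noteq> None \<or> c_n \<sigma> y t \<le> enat (nat (t - - int j))"
  proof (cases "l = j")
    case True then show ?thesis using j tl by (simp add: sq_def)
  next
    case False
    then have lj: "l < j" using tl by simp
    define K where "K = j - l"
    have K: "nat (t - - int j) = K" using tl lj by (simp add: K_def)
    have "c_n \<sigma> y t \<le> enat K"
      unfolding c_n_def
    proof (rule SUP_least)
      fix a assume "a \<in> biseqs"
      define z where "z = (\<lambda>k. Yfill y a (t - int k))"
      have "(\<Sum>i<K. bval (sq y (l+i))) \<le> (\<Sum>i<K. (if z i = 1 then 1 else 0 :: real))"
        by (intro sum_mono) (auto simp: bval_def z_def Yfill_def sq_def tl split: option.splits)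
      moreover have "(\<Sum>i<K. bval (sq y (l+i))) = (\<Sum>i\<in>{l..<j}. bval (sq y i))"
      proof -
        have "(\<Sum>i\<in>{l..<j}. bval (sq y i)) = (\<Sum>i\<in>{0+l..<K+l}. bval (sq y i))"
          using lj by (simp add: K_def)
        also have "\<dots> = (\<Sum>i<K. bval (sq y (i+l)))"
          by (subst sum.shift_bounds_nat_ivl) (simp add: atLeast0LessThan)
        finally show ?thesis by (simp add: add.commute)
      qed
      moreover have "Wk \<sigma> y j - Wk \<sigma> y l = (\<Sum>i\<in>{l..<j}. bval (sq y i)) - \<sigma> * K"
      proof -
        have "Wk \<sigma> y j = Wk \<sigma> y l + (\<Sum>i\<in>{l..<j}. bval (sq y i) - \<sigma>)"
          unfolding Wk_def using lj
          by (simp add: atLeast0LessThan[symmetric] sum.atLeastLessThan_concat)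
        then show ?thesis using lj by (simp add: sum_subtractf K_def)
      qed
      moreover have "Wk \<sigma> y l \<le> Wk \<sigma> y j" using Mx_ge[of l j] tl j by simp
      ultimately have "\<sigma> * K \<le> (\<Sum>i<K. (if z i = 1 then 1 else 0 :: real))" by linarith
      then have "\<sigma> \<le> frac z K" using lj by (simp add: frac_def K_def field_simps)
      then have "T_sigma \<sigma> z \<le> enat K" using T_le lj K_def by force
      then show "ctx_len (c_tau \<sigma> (\<lambda>k. Yfill y a (t - int k))) \<le> enat K"
        by (simp add: ctx_len_c_tau z_def)
    qed
    then show ?thesis using K by simp
  qed
qed simp

lemma theta_le0: "theta_bar \<sigma> y 0 \<le> 0"
  unfolding theta_bar_Sset by (rule Sup_least) (auto simp: Sset_def)

lemma tail_det:
  assumes "ereal (real n) \<le> \<bar>theta_bar \<sigma> y 0\<bar>"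
  shows "nogoodL \<sigma> 0 (map (sq y) [0..<n])"
proof (rule ccontr)
  assume "\<not> ?thesis"
  from nogood_good[of \<sigma> 0 y 0 n] this obtain j where j: "j < n" "sq y j \<noteq> None" "Wk \<sigma> y j = Mx \<sigma> y j"
    by (auto simp: Wk_def)
  have "ereal (- real j) \<le> theta_bar \<sigma> y 0"
    unfolding theta_bar_Sset using good_in_S[OF j(2,3)]
    by (intro Sup_upper) force
  moreover have "theta_bar \<sigma> y 0 \<le> 0" by (rule theta_le0)
  ultimately have "\<bar>theta_bar \<sigma> y 0\<bar> \<le> ereal (real j)"
    by (cases "theta_bar \<sigma> y 0") auto
  then show False using assms j(1) by (smt (verit) ereal_less_eq(3) of_nat_less_iff order_trans)
qed


lemma (in prob_space) map_eq_meas: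
  assumes "\<And>t v. {\<omega>\<in>space M. X t \<omega> = v} \<in> events"
  shows "{\<omega>\<in>space M. map (\<lambda>t. X t \<omega>) js = vs} \<in> events"
proof (induction js arbitrary: vs)
  case Nil then show ?case by (cases vs) auto
next
  case (Cons t js)
  show ?case
  proof (cases vs)
    case Nil then show ?thesis by simp
  next
    case (Cons v vs')
    have "{\<omega>\<in>space M. map (\<lambda>t. X t \<omega>) (t#js) = vs} =
       {\<omega>\<in>space M. X t \<omega> = v} \<inter> {\<omega>\<in>space M. map (\<lambda>t. X t \<omega>) js = vs'}"
      using Cons by auto
    then show ?thesis using Cons.IH assms by auto
  qed
qed

lemma (in prob_space) map_Q_meas:
  fixes X :: "'i \<Rightarrow> 'a \<Rightarrow> 'b::countable"
  assumes "\<And>t v. {\<omega>\<in>space M. X t \<omega> = v} \<in> events"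
  shows "{\<omega>\<in>space M. Q (map (\<lambda>t. X t \<omega>) js)} \<in> events"
proof -
  have m: "(\<lambda>\<omega>. map (\<lambda>t. X t \<omega>) js) \<in> measurable M (count_space UNIV)"
    unfolding measurable_count_space_eq2_countable
  proof (intro conjI ballI)
    fix vs :: "'b list"
    have "(\<lambda>\<omega>. map (\<lambda>t. X t \<omega>) js) -` {vs} \<inter> space M = {\<omega>\<in>space M. map (\<lambda>t. X t \<omega>) js = vs}" by auto
    then show "(\<lambda>\<omega>. map (\<lambda>t. X t \<omega>) js) -` {vs} \<inter> space M \<in> sets M"
      using map_eq_meas[OF assms] by simp
  qed auto
  have "{\<omega>\<in>space M. Q (map (\<lambda>t. X t \<omega>) js)} = (\<lambda>\<omega>. map (\<lambda>t. X t \<omega>) js) -` {vs. Q vs} \<inter> space M" by auto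
  then show ?thesis using measurable_sets[OF m, of "{vs. Q vs}"] by simp
qed

lemma (in prob_space) prob_pattern:
  assumes meas: "\<And>t v. {\<omega>\<in>space M. X t \<omega> = v} \<in> events"
    and ind: "\<And>J f. finite J \<Longrightarrow> J \<noteq> {} \<Longrightarrow>
        prob (\<Inter>t\<in>J. {\<omega>\<in>space M. X t \<omega> = f t}) = (\<Prod>t\<in>J. prob {\<omega>\<in>space M. X t \<omega> = f t})"
    and pv: "\<And>t v. prob {\<omega>\<in>space M. X t \<omega> = v} = p v"
    and d: "distinct js" and l: "length vs = length js"
  shows "prob {\<omega>\<in>space M. map (\<lambda>t. X t \<omega>) js = vs} = prod_list (map p vs)"
proof (cases "js = []")
  case True then show ?thesis using l prob_space by simp
next
  case False
  define f where "f t = the (map_of (zip js vs) t)" for t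
  have fn: "\<And>k. k < length js \<Longrightarrow> f (js ! k) = vs ! k"
    unfolding f_def using map_of_zip_nth[of js vs] l d by (metis option.sel)
  have mf: "map f js = vs" using fn l by (intro nth_equalityI) auto
  have "{\<omega>\<in>space M. map (\<lambda>t. X t \<omega>) js = vs} = (\<Inter>t\<in>set js. {\<omega>\<in>space M. X t \<omega> = f t})"
  proof -
    have "\<And>\<omega>. map (\<lambda>t. X t \<omega>) js = vs \<longleftrightarrow> (\<forall>t\<in>set js. X t \<omega> = f t)"
      by (metis (mono_tags, lifting) map_eq_conv mf)
    then show ?thesis using False by (auto simp: neq_Nil_conv)
  qed
  then have "prob {\<omega>\<in>space M. map (\<lambda>t. X t \<omega>) js = vs} = (\<Prod>t\<in>set js. prob {\<omega>\<in>space M. X t \<omega> = f t})"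
    using ind[of "set js" f] False by simp
  also have "\<dots> = (\<Prod>t\<in>set js. p (f t))" using pv by simp
  also have "\<dots> = prod_list (map p (map f js))" using d by (simp add: prod.distinct_set_conv_list comp_def)
  finally show ?thesis using mf by simp
qed

lemma (in prob_space) prob_Q_sum:
  fixes X :: "'i \<Rightarrow> 'a \<Rightarrow> 'b::countable"
  assumes meas: "\<And>t v. {\<omega>\<in>space M. X t \<omega> = v} \<in> events"
    and fin: "finite V" and val: "\<And>t \<omega>. \<omega> \<in> space M \<Longrightarrow> X t \<omega> \<in> V"
  shows "prob {\<omega>\<in>space M. Q (map (\<lambda>t. X t \<omega>) js)} =
      (\<Sum>vs\<in>Ls V (length js). if Q vs then prob {\<omega>\<in>space M. map (\<lambda>t. X t \<omega>) js = vs} else 0)"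
proof -
  let ?B = "\<lambda>vs. {\<omega>\<in>space M. map (\<lambda>t. X t \<omega>) js = vs}"
  have finL: "finite (Ls V (length js))" unfolding Ls_def using fin by (rule finite_lists_length_eq)
  have "{\<omega>\<in>space M. Q (map (\<lambda>t. X t \<omega>) js)} = (\<Union>vs\<in>{vs\<in>Ls V (length js). Q vs}. ?B vs)"
    using val by (auto simp: Ls_def)
  moreover have "prob (\<Union>vs\<in>{vs\<in>Ls V (length js). Q vs}. ?B vs) = (\<Sum>vs\<in>{vs\<in>Ls V (length js). Q vs}. prob (?B vs))"
    using finL map_eq_meas[of X, OF meas]
    by (intro finite_measure_finite_Union) (auto simp: disjoint_family_on_def)
  ultimately have "prob {\<omega>\<in>space M. Q (map (\<lambda>t. X t \<omega>) js)} = (\<Sum>vs\<in>{vs\<in>Ls V (length js). Q vs}. prob (?B vs))"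
    by simp
  also have "\<dots> = (\<Sum>vs\<in>Ls V (length js). if Q vs then prob (?B vs) else 0)"
    using finL by (rule sum.inter_filter)
  finally show ?thesis .
qed


lemma cn_le_iff: "c_n \<sigma> y j \<le> enat K \<longleftrightarrow>
   (\<forall>a\<in>biseqs. \<exists>k. 1 \<le> k \<and> k \<le> K \<and> \<sigma> \<le> frac (\<lambda>k. Yfill y a (j - int k)) k)"
  unfolding c_n_def SUP_le_iff ctx_len_c_tau T_le ..

lemma frac_cong: "(\<And>i. i < k \<Longrightarrow> z i = z' i) \<Longrightarrow> frac z k = frac z' k"
  unfolding frac_def by (intro arg_cong2[where f="(/)"] sum.cong) auto

lemma cn_local:
  assumes "\<And>m. m < K \<Longrightarrow> y (j - int m) = y' (j - int m)"
  shows "c_n \<sigma> y j \<le> enat K \<longleftrightarrow> c_n \<sigma> y' j \<le> enat K"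
proof -
  have "\<And>a k. k \<le> K \<Longrightarrow> frac (\<lambda>k. Yfill y a (j - int k)) k = frac (\<lambda>k. Yfill y' a (j - int k)) k"
    using assms by (intro frac_cong) (auto simp: Yfill_def)
  then show ?thesis unfolding cn_le_iff by (metis (no_types, lifting))
qed

lemma S_local:
  assumes "\<And>t. i \<le> t \<Longrightarrow> t \<le> 0 \<Longrightarrow> y t = y' t"
  shows "i \<in> Sset \<sigma> y \<longleftrightarrow> i \<in> Sset \<sigma> y'"
proof -
  have "\<And>j. j \<in> {i..0} \<Longrightarrow> (y j \<noteq> None \<or> c_n \<sigma> y j \<le> enat (nat (j - i))) \<longleftrightarrow>
                            (y' j \<noteq> None \<or> c_n \<sigma> y' j \<le> enat (nat (j - i)))"
  proof -
    fix j assume j: "j \<in> {i..0}"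
    have "c_n \<sigma> y j \<le> enat (nat (j - i)) \<longleftrightarrow> c_n \<sigma> y' j \<le> enat (nat (j - i))"
      using j by (intro cn_local assms) auto
    then show "?thesis j" using j assms by auto
  qed
  then show ?thesis unfolding Sset_def by auto
qed

definition recon :: "int \<Rightarrow> int option list \<Rightarrow> int \<Rightarrow> int option" where
  "recon i vs t = (if i \<le> t \<and> t \<le> 0 then vs ! nat (t - i) else None)"

lemma S_recon: "i \<in> Sset \<sigma> y \<longleftrightarrow> i \<in> Sset \<sigma> (recon i (map y [i..0]))"
  by (intro S_local) (auto simp: recon_def nth_upto)

lemma exp_le_quad: fixes x :: real assumes "\<bar>x\<bar> \<le> 1" shows "exp x \<le> 1 + x + x\<^sup>2"
proof (cases "x \<ge> 0")
  case True then show ?thesis using exp_bound assms by auto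
next
  case False
  have "1 - x \<le> exp (- x)" using exp_ge_add_one_self[of "-x"] by simp
  then have "exp x \<le> 1 / (1 - x)" using False
    by (simp add: exp_minus field_simps)
  also have "\<dots> \<le> 1 + x + x\<^sup>2"
  proof -
    have "(1 + x + x\<^sup>2) * (1 - x) = 1 - x^3" by (simp add: algebra_simps power2_eq_square power3_eq_cube)
    moreover have "x^3 \<le> 0" using False
    proof -
      have "0 \<le> x * x" by simp
      then have "x * x * x \<le> 0" using False by (simp add: mult_nonneg_nonpos)
      then show ?thesis by (simp add: power3_eq_cube)
    qed
    ultimately have "1 \<le> (1 + x + x\<^sup>2) * (1 - x)" by simp
    then show ?thesis using False by (simp add: field_simps)
  qed
  finally show ?thesis .
qed


lemma one_past: "(\<lambda>_. 1) \<in> pasts" by (simp add: pasts_def symA_def)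

lemma alpha_nonneg: assumes "is_kernel P" "a \<in> symA" shows "0 \<le> alpha P a"
  unfolding alpha_def using assms one_past
  by (intro cINF_greatest) (auto simp: is_kernel_def)

lemma alpha_le: assumes "is_kernel P" "a \<in> symA" "z \<in> pasts" shows "alpha P a \<le> P a z"
  unfolding alpha_def using assms
  by (intro cINF_lower) (auto simp: is_kernel_def bdd_below_def)

lemma alpha_sum_le: assumes "is_kernel P" shows "alpha P (-1) + alpha P 1 \<le> 1"
proof -
  have "(\<Sum>a\<in>symA. P a (\<lambda>_. 1)) = 1" using assms one_past by (auto simp: is_kernel_def)
  then have "P (-1) (\<lambda>_. 1) + P 1 (\<lambda>_. 1) = 1" by (simp add: symA_def)
  moreover have "alpha P (-1) \<le> P (-1) (\<lambda>_. 1)" "alpha P 1 \<le> P 1 (\<lambda>_. 1)"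
    using alpha_le[OF assms] one_past by (auto simp: symA_def)
  ultimately show ?thesis by simp
qed

lemma concat_past_in: assumes "z \<in> pasts" "set v \<subseteq> symA" shows "concat_past z v \<in> pasts"
  using assms by (auto simp: pasts_def concat_past_def)

lemma skel_nonneg: assumes "is_kernel P" "c \<in> tau \<sigma>" shows "0 \<le> skel_p P 1 c"
proof -
  have k: "\<And>z. z \<in> pasts \<Longrightarrow> 0 \<le> P 1 z" using assms(1) by (auto simp: is_kernel_def symA_def)
  show ?thesis
  proof (cases c)
    case (Inl v)
    then obtain a n where a: "a \<in> pasts" "v = suffix_string a n" using assms(2) by (auto simp: tau_def)
    then have "set v \<subseteq> symA" by (auto simp: suffix_string_def pasts_def)
    then show ?thesis using Inl one_past k concat_past_in
      by (auto simp: skel_p_def intro!: cINF_greatest)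
  next
    case (Inr u)
    then show ?thesis using assms(2) k by (auto simp: skel_p_def tau_def)
  qed
qed

lemma alpha1_gt:
  assumes K: "is_kernel P" and I: "\<sigma> < (INF v\<in>tau \<sigma>. skel_p P 1 v)"
  shows "\<sigma> < alpha P 1"
proof -
  have bdd: "bdd_below (skel_p P 1 ` tau \<sigma>)" using skel_nonneg[OF K] by (auto simp: bdd_below_def)
  have "(INF v\<in>tau \<sigma>. skel_p P 1 v) \<le> alpha P 1"
    unfolding alpha_def
  proof (intro cINF_greatest)
    show "pasts \<noteq> {}" using one_past by auto
  next
    fix z assume z: "z \<in> pasts"
    have k: "\<And>z. z \<in> pasts \<Longrightarrow> 0 \<le> P 1 z" using K by (auto simp: is_kernel_def symA_def)
    have inc: "c_tau \<sigma> z \<in> tau \<sigma>" using z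
      by (cases "T_sigma \<sigma> z") (auto simp: c_tau_def tau_def)
    have "skel_p P 1 (c_tau \<sigma> z) \<le> P 1 z"
    proof (cases "T_sigma \<sigma> z")
      case (enat n)
      define v where "v = suffix_string z n"
      define z' where "z' = (\<lambda>k. z (k + n))"
      have z': "z' \<in> pasts" using z by (auto simp: pasts_def z'_def)
      have sv: "set v \<subseteq> symA" using z by (auto simp: v_def suffix_string_def pasts_def)
      have cz: "concat_past z' v = z"
        by (auto simp: concat_past_def v_def z'_def suffix_string_def rev_nth)
      have "(INF z\<in>pasts. P 1 (concat_past z v)) \<le> P 1 (concat_past z' v)"
        using z' sv k concat_past_in by (intro cINF_lower) (auto simp: bdd_below_def intro!: exI[of _ 0])
      then show ?thesis using enat cz by (simp add: c_tau_def skel_p_def v_def)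
    next
      case infinity
      then show ?thesis by (simp add: c_tau_def skel_p_def)
    qed
    then show "(INF v\<in>tau \<sigma>. skel_p P 1 v) \<le> P 1 z"
      using cINF_lower[OF bdd inc] by linarith
  qed
  then show ?thesis using I by linarith
qed


lemma Yvar_meas: "Yvar P a1 a2 \<in> borel \<rightarrow>\<^sub>M count_space UNIV"
  unfolding Yvar_def by measurable

theorem mainTheorem7:
  fixes M :: "'w measure" and U :: "int \<Rightarrow> 'w \<Rightarrow> real"
    and P :: "int \<Rightarrow> (nat \<Rightarrow> int) \<Rightarrow> real" and \<sigma> :: real and a1 a2 :: int
  assumes "prob_space M"
    and "prob_space.indep_vars M (\<lambda>_. borel) U UNIV"
    and "\<forall>i. distr M lborel (U i) = uniform_measure lborel {0..<1}"
    and "symA = {a1, a2}" and "a1 \<noteq> a2"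
    and "0 < \<sigma>" and "\<sigma> < 1"
    and "is_kernel P"
    and "\<sigma> < (INF v\<in>tau \<sigma>. skel_p P 1 v)"
  shows "let \<theta> = (\<lambda>\<omega>. theta_bar \<sigma> (\<lambda>i. Yvar P a1 a2 (U i \<omega>)) 0) in
           \<theta> \<in> borel_measurable M
         \<and> (\<integral>\<^sup>+ \<omega>. e2ennreal \<bar>\<theta> \<omega>\<bar> \<partial>M) < \<infinity>
         \<and> (\<exists>D>0. \<exists>d. 0 < d \<and> d < 1 \<and>
              (\<forall>n::nat. measure M {\<omega>\<in>space M. \<bar>\<theta> \<omega>\<bar> \<ge> ereal (real n)} \<le> D * d ^ n))"
proof -
  interpret prob_space M by fact
  note ind = assms(2) and uni = assms(3) and A = assms(4) and a12 = assms(5)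
    and s0 = assms(6) and s1 = assms(7) and K = assms(8)
  define Y where "Y t \<omega> = Yvar P a1 a2 (U t \<omega>)" for t \<omega>
  define \<theta> where "\<theta> = (\<lambda>\<omega>. theta_bar \<sigma> (\<lambda>i. Yvar P a1 a2 (U i \<omega>)) 0)"
  have \<theta>Y: "\<theta> \<omega> = theta_bar \<sigma> (\<lambda>i. Y i \<omega>) 0" for \<omega> by (simp add: \<theta>_def Y_def)
  define q where "q = alpha P 1"
  define \<beta> where "\<beta> = alpha_m1 P"
  define \<alpha>1 where "\<alpha>1 = alpha P a1"
  have Aeq: "{a1, a2} = {-1, 1::int}" using A by (simp add: symA_def)
  have sA: "a1 \<in> symA" "a2 \<in> symA" using A by auto
  have b12: "\<beta> = alpha P a1 + alpha P a2"
    using Aeq a12 by (auto simp: \<beta>_def alpha_m1_def doubleton_eq_iff)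
  have al0: "0 \<le> alpha P a1" "0 \<le> alpha P a2" using alpha_nonneg[OF K] sA by auto
  have b1: "\<beta> \<le> 1" using alpha_sum_le[OF K] by (simp add: \<beta>_def alpha_m1_def)
  have qs: "\<sigma> < q" using alpha1_gt[OF K assms(9)] by (simp add: q_def)
  have qb: "q \<le> \<beta>" using Aeq al0 b12 by (auto simp: q_def doubleton_eq_iff)
  have Umeas: "\<And>t. U t \<in> borel_measurable M"
    using ind by (simp add: indep_vars_def)
  have PU: "prob {\<omega>\<in>space M. U t \<omega> < x} = x" if x: "0 \<le> x" "x \<le> 1" for t x
  proof -
    have "prob {\<omega>\<in>space M. U t \<omega> < x} = measure (distr M lborel (U t)) {..<x}"
      using Umeas by (subst measure_distr) (auto simp: vimage_def Int_def conj_commute)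
    also have "\<dots> = measure (uniform_measure lborel {0..<1::real}) {..<x}" using uni by simp
    also have "\<dots> = measure lborel ({0..<1} \<inter> {..<x}) / measure lborel {0..<1::real}"
      by (subst measure_uniform_measure) auto
    also have "{0..<1} \<inter> {..<x} = {0..<x}" using x by auto
    finally show ?thesis using x by simp
  qed
  have Ysets: "\<And>t v. {\<omega>\<in>space M. Y t \<omega> = v} = U t -` (Yvar P a1 a2 -` {v}) \<inter> space M"
    by (auto simp: Y_def)
  have Yvb: "\<And>v. Yvar P a1 a2 -` {v} \<in> sets borel"
    using measurable_sets[OF Yvar_meas[of P a1 a2], of "{v}" for v] by simp
  have Ymeas: "\<And>t v. {\<omega>\<in>space M. Y t \<omega> = v} \<in> events"
    unfolding Ysets using Yvb Umeas by (auto intro: measurable_sets)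
  define V where "V = {Some a1, Some a2, None :: int option}"
  define p where "p v = (if v = Some a1 then alpha P a1 else if v = Some a2 then alpha P a2
        else if v = None then 1 - \<beta> else 0)" for v
  have finV: "finite V" by (simp add: V_def)
  have Yval: "\<And>t \<omega>. Y t \<omega> \<in> V" by (auto simp: Y_def Yvar_def V_def)
  have pnn: "\<And>v. v \<in> V \<Longrightarrow> 0 \<le> p v" using al0 b1 by (auto simp: p_def V_def)
  have psum: "(\<Sum>v\<in>V. p v) = 1" using a12 b12 by (simp add: V_def p_def)
  have S1: "Some 1 \<in> V" using Aeq by (auto simp: V_def doubleton_eq_iff)
  have pq: "p (Some 1) = q" using Aeq a12 by (auto simp: p_def q_def doubleton_eq_iff)
  have pN: "p None = 1 - \<beta>" by (simp add: p_def)
  have pv: "prob {\<omega>\<in>space M. Y t \<omega> = v} = p v" for t v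
  proof -
    have ab: "alpha P a1 \<le> \<beta>" using b12 al0 by simp
    have L1: "{\<omega>\<in>space M. U t \<omega> < \<beta>} \<in> events" "{\<omega>\<in>space M. U t \<omega> < alpha P a1} \<in> events"
      using Umeas by measurable
    consider "v = Some a1" | "v = Some a2" | "v = None" | "v \<notin> V" by (auto simp: V_def)
    then show ?thesis
    proof cases
      case 1
      then have "{\<omega>\<in>space M. Y t \<omega> = v} = {\<omega>\<in>space M. U t \<omega> < alpha P a1}"
        using a12 by (auto simp: Y_def Yvar_def)
      then show ?thesis using 1 PU[of "alpha P a1" t] al0 ab b1 by (simp add: p_def)
    next
      case 2
      then have "{\<omega>\<in>space M. Y t \<omega> = v} = {\<omega>\<in>space M. U t \<omega> < \<beta>} - {\<omega>\<in>space M. U t \<omega> < alpha P a1}"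
        using a12 by (auto simp: Y_def Yvar_def \<beta>_def)
      then have "prob {\<omega>\<in>space M. Y t \<omega> = v} = \<beta> - alpha P a1"
        using L1 PU[of "alpha P a1" t] PU[of \<beta> t] al0 ab b1 finite_measure_Diff[OF L1] by force
      then show ?thesis using 2 a12 b12 by (simp add: p_def)
    next
      case 3
      then have "{\<omega>\<in>space M. Y t \<omega> = v} = space M - {\<omega>\<in>space M. U t \<omega> < \<beta>}"
        using ab by (auto simp: Y_def Yvar_def \<beta>_def)
      then show ?thesis using 3 L1 PU[of \<beta> t] ab al0 b1 by (simp add: prob_compl p_def)
    next
      case 4
      then have e: "{\<omega>\<in>space M. Y t \<omega> = v} = {}" using Yval by auto
      show ?thesis using 4 unfolding e by (auto simp: p_def V_def)
    qed
  qed
  have indY: "prob (\<Inter>t\<in>J. {\<omega>\<in>space M. Y t \<omega> = f t}) = (\<Prod>t\<in>J. prob {\<omega>\<in>space M. Y t \<omega> = f t})"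
    if "finite J" "J \<noteq> {}" for J f
  proof -
    have "indep_sets (\<lambda>i. sigma_sets (space M) {U i -` A \<inter> space M | A. A \<in> sets borel}) UNIV"
      using ind by (simp add: indep_vars_def)
    then show ?thesis
      by (rule indep_setsD) (use that Yvb in \<open>auto simp: Ysets\<close>)
  qed
  define js where "js n = map (\<lambda>k. - int k) [0..<n]" for n
  define E where "E n = {\<omega>\<in>space M. nogoodL \<sigma> 0 (map (\<lambda>t. Y t \<omega>) (js n))}" for n
  have Emeas: "E n \<in> events" for n unfolding E_def by (rule map_Q_meas[OF Ymeas])
  have probE: "prob (E n) = wsum V p \<sigma> n 0" for n
  proof -
    have lj: "length (js n) = n" by (simp add: js_def)
    have dj: "distinct (js n)" by (simp add: js_def distinct_map inj_on_def)
    have "prob (E n) = (\<Sum>vs\<in>Ls V n. if nogoodL \<sigma> 0 vs then prob {\<omega>\<in>space M. map (\<lambda>t. Y t \<omega>) (js n) = vs} else 0)"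
      unfolding E_def using prob_Q_sum[OF Ymeas finV Yval, where Q="nogoodL \<sigma> 0" and js="js n"] lj by simp
    also have "\<dots> = wsum V p \<sigma> n 0" unfolding wsum_def
      by (intro sum.cong refl) (simp add: prob_pattern[OF Ymeas indY pv dj] lj Ls_def)
    finally show ?thesis .
  qed
  define lm where "lm = min ((q - \<sigma>) / 2) (\<beta> / 4)"
  define \<rho>1 where "\<rho>1 = q * exp (- lm * (1 - \<sigma>)) + (1 - q) * exp (lm * \<sigma>)"
  define \<rho> where "\<rho> = max \<rho>1 ((1 - \<beta>) * exp lm)"
  have lm0: "0 < lm" "lm \<le> 1" using qs qb s0 b1 by (auto simp: lm_def)
  have q01: "0 < q" "q \<le> 1" using qs qb b1 s0 by auto
  have "\<rho>1 < 1"
  proof -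
    have e1: "exp (- lm * (1 - \<sigma>)) \<le> 1 + (- lm * (1 - \<sigma>)) + (- lm * (1 - \<sigma>))\<^sup>2"
      using lm0 s0 s1 by (intro exp_le_quad) (auto simp: abs_mult mult_le_one)
    have e2: "exp (lm * \<sigma>) \<le> 1 + lm * \<sigma> + (lm * \<sigma>)\<^sup>2"
      using lm0 s0 s1 by (intro exp_le_quad) (auto simp: abs_mult mult_le_one)
    have "\<rho>1 \<le> q * (1 + (- lm * (1 - \<sigma>)) + (- lm * (1 - \<sigma>))\<^sup>2) + (1 - q) * (1 + lm * \<sigma> + (lm * \<sigma>)\<^sup>2)"
      unfolding \<rho>1_def using e1 e2 q01 by (intro add_mono mult_left_mono) auto
    also have "\<dots> = 1 - lm * (q - \<sigma>) + lm\<^sup>2 * (q * (1 - \<sigma>)\<^sup>2 + (1 - q) * \<sigma>\<^sup>2)"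
      by (simp add: algebra_simps power2_eq_square)
    also have "\<dots> \<le> 1 - lm * (q - \<sigma>) + lm\<^sup>2 * 1"
    proof -
      have "(1 - \<sigma>)\<^sup>2 \<le> 1" "\<sigma>\<^sup>2 \<le> 1" using s0 s1 by (auto simp: power_le_one abs_le_iff power2_le_iff_abs_le)
      then have "q * (1 - \<sigma>)\<^sup>2 + (1 - q) * \<sigma>\<^sup>2 \<le> q * 1 + (1 - q) * 1"
        using q01 by (intro add_mono mult_left_mono) auto
      then show ?thesis by (intro add_left_mono mult_left_mono) auto
    qed
    also have "\<dots> < 1"
    proof -
      have "lm \<le> (q - \<sigma>) / 2" unfolding lm_def by (rule min.cobounded1)
      then have "lm * lm \<le> lm * ((q - \<sigma>) / 2)" using lm0 by (intro mult_left_mono) auto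
      moreover have "0 < lm * (q - \<sigma>)" using lm0 qs by simp
      ultimately show ?thesis by (simp add: power2_eq_square)
    qed
    finally show ?thesis .
  qed
  moreover have "(1 - \<beta>) * exp lm < 1"
  proof -
    have "exp lm \<le> 1 + lm + lm\<^sup>2" using lm0 by (intro exp_le_quad) auto
    also have "\<dots> \<le> 1 + 2 * lm" using lm0 by (simp add: power2_eq_square mult_left_le)
    finally have "(1 - \<beta>) * exp lm \<le> (1 - \<beta>) * (1 + 2 * lm)" using b1 by (intro mult_left_mono) auto
    also have "\<dots> \<le> 1 - \<beta> + 2 * lm" using b1 lm0 qb q01 by (simp add: algebra_simps mult_left_le)
    also have "\<dots> < 1" using qb q01 by (simp add: lm_def)
    finally show ?thesis .
  qed
  ultimately have r1: "\<rho> < 1" by (simp add: \<rho>_def)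
  have "0 < \<rho>1" unfolding \<rho>1_def using q01 by (intro add_pos_nonneg) auto
  then have r0: "0 < \<rho>" by (simp add: \<rho>_def)
  have EB: "prob (E n) \<le> \<rho> ^ n" for n
  proof -
    have "wsum V p \<sigma> n 0 \<le> \<rho> ^ n * (if (0::real) \<le> 0 then 1 else exp (lm * (0 + 1 - \<sigma>)))"
      by (rule wsum_bound[OF finV pnn psum S1 _ _ pq pN _ s0 s1]) (auto simp: V_def \<rho>_def \<rho>1_def lm0 less_imp_le)
    then show ?thesis using probE by simp
  qed
  have tailE: "\<omega> \<in> E n" if "\<omega> \<in> space M" "ereal (real n) \<le> \<bar>\<theta> \<omega>\<bar>" for \<omega> n
  proof -
    have "nogoodL \<sigma> 0 (map (sq (\<lambda>i. Y i \<omega>)) [0..<n])"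
      using that(2) unfolding \<theta>Y by (rule tail_det)
    moreover have "map (sq (\<lambda>i. Y i \<omega>)) [0..<n] = map (\<lambda>t. Y t \<omega>) (js n)"
      by (simp add: sq_def js_def)
    ultimately show ?thesis using that(1) by (simp add: E_def)
  qed
  have tail: "measure M {\<omega>\<in>space M. \<bar>\<theta> \<omega>\<bar> \<ge> ereal (real n)} \<le> 1 * \<rho> ^ n" for n
  proof -
    have "measure M {\<omega>\<in>space M. \<bar>\<theta> \<omega>\<bar> \<ge> ereal (real n)} \<le> prob (E n)"
      using tailE Emeas by (intro finite_measure_mono) auto
    then show ?thesis using EB[of n] by simp
  qed
  define Aset where "Aset i = {\<omega>. i \<in> Sset \<sigma> (\<lambda>t. Y t \<omega>)}" for i
  have Ameas: "Aset i \<inter> space M \<in> sets M" for i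
  proof -
    have "Aset i \<inter> space M = {\<omega>\<in>space M. (\<lambda>vs. i \<in> Sset \<sigma> (recon i vs)) (map (\<lambda>t. Y t \<omega>) [i..0])}"
      unfolding Aset_def using S_recon[of i \<sigma>] by auto
    then show ?thesis using map_Q_meas[OF Ymeas] by simp
  qed
  have \<theta>SUP: "\<theta> \<omega> = (SUP i\<in>{..0::int}. if \<omega> \<in> Aset i then ereal (real_of_int i) else -\<infinity>)" for \<omega>
  proof -
    let ?S = "Sset \<sigma> (\<lambda>t. Y t \<omega>)"
    have sub: "?S \<subseteq> {..0}" by (auto simp: Sset_def)
    have "Sup ((\<lambda>i. ereal (real_of_int i)) ` ?S) = (SUP i\<in>{..0::int}. if \<omega> \<in> Aset i then ereal (real_of_int i) else -\<infinity>)"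
    proof (rule antisym)
      show "Sup ((\<lambda>i. ereal (real_of_int i)) ` ?S) \<le> (SUP i\<in>{..0::int}. if \<omega> \<in> Aset i then ereal (real_of_int i) else -\<infinity>)"
      proof (rule Sup_least)
        fix x assume "x \<in> (\<lambda>i. ereal (real_of_int i)) ` ?S"
        then obtain i where i: "i \<in> ?S" "x = ereal (real_of_int i)" by auto
        then show "x \<le> (SUP i\<in>{..0::int}. if \<omega> \<in> Aset i then ereal (real_of_int i) else -\<infinity>)"
          using sub by (intro SUP_upper2[of i]) (auto simp: Aset_def)
      qed
    next
      show "(SUP i\<in>{..0::int}. if \<omega> \<in> Aset i then ereal (real_of_int i) else -\<infinity>) \<le> Sup ((\<lambda>i. ereal (real_of_int i)) ` ?S)"
        by (rule SUP_least) (auto simp: Aset_def intro: Sup_upper)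
    qed
    then show ?thesis unfolding \<theta>Y theta_bar_Sset .
  qed
  have \<theta>meas: "\<theta> \<in> borel_measurable M"
  proof -
    have "(\<lambda>\<omega>. SUP i\<in>{..0::int}. if \<omega> \<in> Aset i then ereal (real_of_int i) else -\<infinity>) \<in> borel_measurable M"
      using Ameas by (intro borel_measurable_SUP measurable_If_set) auto
    moreover have "\<theta> = (\<lambda>\<omega>. SUP i\<in>{..0::int}. if \<omega> \<in> Aset i then ereal (real_of_int i) else -\<infinity>)"
      by (rule ext) (rule \<theta>SUP)
    ultimately show ?thesis by (simp only:)
  qed
  have Ind: "e2ennreal \<bar>\<theta> \<omega>\<bar> \<le> (\<Sum>n. indicator (E n) \<omega>)" if \<omega>: "\<omega> \<in> space M" for \<omega>
  proof -
    define s where "s = (\<Sum>n. indicator (E n) \<omega> :: ennreal)"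
    have part: "of_nat N \<le> s" if "\<forall>n<N. ereal (real n) \<le> \<bar>\<theta> \<omega>\<bar>" for N
    proof -
      have "(\<Sum>n<N. indicator (E n) \<omega> :: ennreal) = (\<Sum>n<N. 1)"
        using that tailE[OF \<omega>] by (intro sum.cong) auto
      moreover have "(\<Sum>n<N. indicator (E n) \<omega> :: ennreal) \<le> s"
        unfolding s_def by (intro sum_le_suminf) auto
      ultimately show ?thesis by simp
    qed
    show ?thesis
    proof (cases "\<bar>\<theta> \<omega>\<bar>")
      case (real r)
      have "0 \<le> \<bar>\<theta> \<omega>\<bar>" by simp
      then have r0: "0 \<le> r" using real by simp
      define N where "N = nat \<lfloor>r\<rfloor> + 1"
      have "\<forall>n<N. ereal (real n) \<le> \<bar>\<theta> \<omega>\<bar>"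
      proof (intro allI impI)
        fix n assume "n < N"
        then have "int n \<le> \<lfloor>r\<rfloor>" using r0 by (simp add: N_def) linarith
        then have "real n \<le> r" by (simp add: le_floor_iff)
        then show "ereal (real n) \<le> \<bar>\<theta> \<omega>\<bar>" using real by simp
      qed
      then have "of_nat N \<le> s" by (rule part)
      moreover have "ennreal r \<le> of_nat N"
      proof -
        have "r \<le> real N" using r0 by (simp add: N_def) linarith
        then show ?thesis by (simp add: ennreal_of_nat_eq_real_of_nat ennreal_leI)
      qed
      ultimately have "ennreal r \<le> s" by (rule order_trans[rotated])
      moreover have "e2ennreal \<bar>\<theta> \<omega>\<bar> = ennreal r" using real by (simp add: e2ennreal_ereal)
      ultimately show ?thesis by (simp add: s_def)
    next
      case PInf
      have "s = top"
      proof (rule ccontr)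
        assume "s \<noteq> top"
        then obtain r where r: "0 \<le> r" "s = ennreal r" using less_top_ennreal top.not_eq_extremum by blast
        have "of_nat (nat \<lceil>r\<rceil> + 1) \<le> s" using PInf by (intro part) auto
        then have "ennreal (real (nat \<lceil>r\<rceil> + 1)) \<le> ennreal r" using r
          by (simp add: ennreal_of_nat_eq_real_of_nat)
        then have "real (nat \<lceil>r\<rceil> + 1) \<le> r" using r(1) ennreal_le_iff by blast
        then show False by linarith
      qed
      then show ?thesis using PInf s_def by simp
    next
      case MInf
      then show ?thesis using abs_ereal_pos[of "\<theta> \<omega>"] by simp
    qed
  qed
  have integ: "(\<integral>\<^sup>+ \<omega>. e2ennreal \<bar>\<theta> \<omega>\<bar> \<partial>M) < \<infinity>"
  proof -
    have "(\<integral>\<^sup>+ \<omega>. e2ennreal \<bar>\<theta> \<omega>\<bar> \<partial>M) \<le> (\<integral>\<^sup>+ \<omega>. (\<Sum>n. indicator (E n) \<omega>) \<partial>M)"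
      using Ind by (intro nn_integral_mono) auto
    also have "\<dots> = (\<Sum>n. emeasure M (E n))"
      using Emeas by (subst nn_integral_suminf) auto
    also have "\<dots> \<le> (\<Sum>n. ennreal (\<rho> ^ n))"
      using EB Emeas by (intro suminf_le) (auto simp: emeasure_eq_measure intro!: ennreal_leI)
    also have "\<dots> = ennreal (\<Sum>n. \<rho> ^ n)"
      using r0 r1 by (intro suminf_ennreal2) auto
    also have "\<dots> < \<infinity>" by simp
    finally show ?thesis .
  qed
  have main: "\<theta> \<in> borel_measurable M \<and> (\<integral>\<^sup>+ \<omega>. e2ennreal \<bar>\<theta> \<omega>\<bar> \<partial>M) < \<infinity>
         \<and> (\<exists>D>0. \<exists>d. 0 < d \<and> d < 1 \<and>
              (\<forall>n::nat. measure M {\<omega>\<in>space M. \<bar>\<theta> \<omega>\<bar> \<ge> ereal (real n)} \<le> D * d ^ n))"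
    using \<theta>meas integ tail r0 r1 by (intro conjI exI[of _ "1::real"] exI[of _ \<rho>]) auto
  then show ?thesis unfolding Let_def \<theta>_def .
qed

end
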